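(* There is an absolute constant $c>0$ such that for every integer $k\geq 2$, the largest number $N(k)$ of vertices of a connected integral circulant graph $G(n;S)$ of degree $k$ satisfies $$N(k)\leq \exp\left(c\sqrt{k\log\log(k+2)}\,\log k\right).$$
   Context: For an integer $n$ and a set $S\subseteq\{1,\dots,n-1\}$ such that $s\in S$ if and only if $n-s\in S$, the circulant graph $G(n;S)$ is the undirected graph on vertex set $\mathbb{Z}_n$ in which $i$ and $j$ are adjacent iff $i-j \bmod n\in S$; its degree is $\#S$. A graph is integral if all eigenvalues of its adjacency matrix are integers. *)

theory Defs
  imports Complex_Main "Jordan_Normal_Form.Char_Poly"
begin

definition circulant_set :: "nat \<Rightarrow> nat set \<Rightarrow> bool" where
  "circulant_set n S \<longleftrightarrow> S \<subseteq> {1..<n} \<and> (\<forall>s\<in>{1..<n}. s \<in> S \<longleftrightarrow> n - s \<in> S)"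

definition circ_adj :: "nat \<Rightarrow> nat set \<Rightarrow> nat \<Rightarrow> nat \<Rightarrow> bool" where
  "circ_adj n S i j \<longleftrightarrow> i < n \<and> j < n \<and> nat ((int i - int j) mod int n) \<in> S"

definition circ_adj_mat :: "nat \<Rightarrow> nat set \<Rightarrow> complex mat" where
  "circ_adj_mat n S = mat n n (\<lambda>(i,j). if circ_adj n S i j then 1 else 0)"

definition integral_circulant :: "nat \<Rightarrow> nat set \<Rightarrow> bool" where
  "integral_circulant n S \<longleftrightarrow> (\<forall>ev. eigenvalue (circ_adj_mat n S) ev \<longrightarrow> ev \<in> \<int>)"

definition connected_circulant :: "nat \<Rightarrow> nat set \<Rightarrow> bool" where
  "connected_circulant n S \<longleftrightarrow> (\<forall>i<n. \<forall>j<n. (circ_adj n S)\<^sup>*\<^sup>* i j)"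

end

theory Submission
  imports Defs "HOL-Number_Theory.Number_Theory"
begin

definition ee :: "nat \<Rightarrow> int \<Rightarrow> complex" where
  "ee n m = cis (2 * pi * of_int m / of_nat n)"

lemma ee_add: "ee n (a + b) = ee n a * ee n b"
  by (simp add: ee_def cis_mult add_divide_distrib ring_distribs)

lemma ee_0[simp]: "ee n 0 = 1"
  by (simp add: ee_def)

lemma ee_mult_n: assumes "n > 0" shows "ee n (int n * m) = 1"
proof -
  have "2 * pi * of_int (int n * m) / of_nat n = 2 * pi * of_int m"
    using assms by (simp add: field_simps)
  then show ?thesis by (simp add: ee_def cis_multiple_2pi)
qed

lemma ee_cong: assumes "n > 0" "a mod int n = b mod int n" shows "ee n a = ee n b"
proof -
  have "a = b + int n * (a div int n - b div int n)"
  proof -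
    have h1: "a = int n * (a div int n) + a mod int n" by simp
    have h2: "b = int n * (b div int n) + b mod int n" by simp
    have "a = b + (int n * (a div int n) - int n * (b div int n))" using h1 h2 assms(2) by linarith
    then show ?thesis by (simp add: right_diff_distrib)
  qed
  then have "ee n a = ee n b * ee n (int n * (a div int n - b div int n))"
    by (metis ee_add)
  then show ?thesis using ee_mult_n[OF assms(1)] by simp
qed

lemma ee_pow: "ee n a ^ k = ee n (a * int k)"
  by (simp add: ee_def DeMoivre field_simps)

lemma ee_uminus: "ee n (- a) * ee n a = 1"
  by (metis ee_add ee_0 add.left_inverse)

lemma ee_eq_1: assumes "n > 0" shows "ee n a = 1 \<longleftrightarrow> int n dvd a"
proof
  assume "int n dvd a"
  then obtain m where "a = int n * m" by (auto elim: dvdE)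
  then show "ee n a = 1" using ee_mult_n[OF assms] by simp
next
  assume "ee n a = 1"
  then have "cos (2 * pi * of_int a / of_nat n) = 1"
    unfolding ee_def by (metis cis.sel(1) one_complex.sel(1))
  then obtain x where x: "2 * pi * of_int a / of_nat n = real_of_int x * 2 * pi"
    by (auto simp: cos_one_2pi_int)
  then have "real_of_int a = real_of_int x * real n"
    using assms by (simp add: field_simps)
  then have "a = x * int n" by (metis of_int_eq_iff of_int_mult of_int_of_nat_eq)
  then show "int n dvd a" by simp
qed

lemma norm_ee[simp]: "norm (ee n a) = 1"
  by (simp add: ee_def)

definition lam :: "nat \<Rightarrow> nat set \<Rightarrow> int \<Rightarrow> complex" where
  "lam n S j = (\<Sum>s\<in>S. ee n (j * int s))"

lemma lam_eigen:
  assumes n: "n > 0" and S: "S \<subseteq> {..<n}"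
  shows "eigenvalue (circ_adj_mat n S) (lam n S j)"
proof -
  define v where "v = vec n (\<lambda>t. ee n (- j * int t))"
  have vc: "v \<in> carrier_vec n" by (simp add: v_def)
  have v0: "v $ 0 = 1" using n by (simp add: v_def)
  have vnz: "v \<noteq> 0\<^sub>v n"
  proof
    assume "v = 0\<^sub>v n" then have "v $ 0 = 0" using n by simp
    with v0 show False by simp
  qed
  have "circ_adj_mat n S *\<^sub>v v = lam n S j \<cdot>\<^sub>v v"
  proof (rule eq_vecI)
    show "dim_vec (circ_adj_mat n S *\<^sub>v v) = dim_vec (lam n S j \<cdot>\<^sub>v v)"
      by (simp add: circ_adj_mat_def v_def)
  next
    fix i assume "i < dim_vec (lam n S j \<cdot>\<^sub>v v)"
    then have i: "i < n" by (simp add: v_def)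
    define phi where "phi = (\<lambda>t::nat. nat ((int i - int t) mod int n))"
    have phi_lt: "phi t < n" for t using n by (simp add: phi_def nat_less_iff)
    have phi_inv: "phi (phi t) = t" if "t < n" for t
    proof -
      have "(int i - (int i - int t) mod int n) mod int n = int t mod int n"
        by (simp add: mod_diff_right_eq)
      also have "\<dots> = int t" using that by simp
      finally show ?thesis using n by (simp add: phi_def)
    qed
    have "(circ_adj_mat n S *\<^sub>v v) $ i = (\<Sum>t = 0..<n. (if phi t \<in> S then 1 else 0) * ee n (- j * int t))"
      using i by (simp add: circ_adj_mat_def v_def scalar_prod_def circ_adj_def phi_def row_def)
    also have "\<dots> = (\<Sum>t \<in> {t\<in>{0..<n}. phi t \<in> S}. ee n (- j * int t))"
    proof -
      have "(\<Sum>t = 0..<n. (if phi t \<in> S then 1 else 0) * ee n (- j * int t))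
          = (\<Sum>t = 0..<n. (if phi t \<in> S then ee n (- j * int t) else 0))"
        by (rule sum.cong) auto
      moreover have "(\<Sum>t \<in> {t\<in>{0..<n}. phi t \<in> S}. ee n (- j * int t))
          = (\<Sum>t = 0..<n. (if phi t \<in> S then ee n (- j * int t) else 0))"
        by (rule sum.inter_filter) simp
      ultimately show ?thesis by simp
    qed
    also have "\<dots> = (\<Sum>s\<in>S. ee n (- j * int (phi s)))"
    proof (rule sum.reindex_bij_witness[where i = phi and j = phi])
      show "\<And>a. a \<in> S \<Longrightarrow> phi (phi a) = a" using S phi_inv by auto
      show "\<And>a. a \<in> S \<Longrightarrow> phi a \<in> {t \<in> {0..<n}. phi t \<in> S}" using S phi_inv phi_lt by auto
      show "\<And>b. b \<in> {t \<in> {0..<n}. phi t \<in> S} \<Longrightarrow> phi (phi b) = b" using phi_inv by auto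
      show "\<And>b. b \<in> {t \<in> {0..<n}. phi t \<in> S} \<Longrightarrow> phi b \<in> S" by auto
    qed (use phi_inv in auto)
    also have "\<dots> = (\<Sum>s\<in>S. ee n (- j * int i) * ee n (j * int s))"
    proof (rule sum.cong[OF refl])
      fix s assume "s \<in> S"
      have "(- j * int (phi s)) mod int n = (- j * int i + j * int s) mod int n"
      proof -
        have "int (phi s) = (int i - int s) mod int n" using n by (simp add: phi_def)
        then have "(- j * int (phi s)) mod int n = (- j * (int i - int s)) mod int n"
          using mod_mult_right_eq[of "-j" "int i - int s" "int n"] by simp
        then show ?thesis by (simp add: algebra_simps)
      qed
      then show "ee n (- j * int (phi s)) = ee n (- j * int i) * ee n (j * int s)"
        using ee_cong[OF n, of "- j * int (phi s)" "- j * int i + j * int s"] ee_add[of n "- j * int i" "j * int s"] by simp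
    qed
    also have "\<dots> = lam n S j * v $ i"
      using i by (simp add: lam_def v_def sum_distrib_left mult.commute)
    finally show "(circ_adj_mat n S *\<^sub>v v) $ i = (lam n S j \<cdot>\<^sub>v v) $ i"
      using i by (simp add: v_def)
  qed
  then have "eigenvector (circ_adj_mat n S) v (lam n S j)"
    using vc vnz by (simp add: eigenvector_def circ_adj_mat_def)
  then show ?thesis by (auto simp: eigenvalue_def)
qed

lemma frob_add:
  fixes a b :: "'a::comm_ring_1"
  assumes p: "prime p"
  shows "\<exists>r. (a + b) ^ p = a ^ p + b ^ p + of_nat p * r"
proof -
  have p0: "p > 0" using p prime_gt_0_nat by blast
  have "(a + b) ^ p = (\<Sum>k\<le>p. of_nat (p choose k) * a ^ k * b ^ (p - k))"
    by (rule binomial_ring)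
  also have "{..p} = insert p (insert 0 {1..<p})" using p0 by auto
  also have "(\<Sum>k\<in>insert p (insert 0 {1..<p}). of_nat (p choose k) * a ^ k * b ^ (p - k))
     = a ^ p + (b ^ p + (\<Sum>k\<in>{1..<p}. of_nat (p choose k) * a ^ k * b ^ (p - k)))"
    using p0 by (simp add: sum.insert)
  also have "(\<Sum>k\<in>{1..<p}. of_nat (p choose k) * a ^ k * b ^ (p - k))
     = of_nat p * (\<Sum>k\<in>{1..<p}. of_nat ((p choose k) div p) * a ^ k * b ^ (p - k))"
  proof -
    have "of_nat (p choose k) * a ^ k * b ^ (p - k) = of_nat p * (of_nat ((p choose k) div p) * a ^ k * b ^ (p - k))"
      if "k \<in> {1..<p}" for k
    proof -
      have "p dvd (p choose k)" using that p by (intro dvd_choose_prime) auto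
      then have "p choose k = p * ((p choose k) div p)" by simp
      then have "(of_nat (p choose k) :: 'a) = of_nat p * of_nat ((p choose k) div p)"
        by (metis of_nat_mult)
      then show ?thesis by (simp add: mult.assoc)
    qed
    then show ?thesis by (simp add: sum_distrib_left)
  qed
  finally show ?thesis by (metis add.assoc)
qed

lemma frob_sum:
  fixes f :: "'b \<Rightarrow> 'a::comm_ring_1"
  assumes p: "prime p" and fin: "finite S"
  shows "\<exists>r. (\<Sum>s\<in>S. f s) ^ p = (\<Sum>s\<in>S. f s ^ p) + of_nat p * r"
  using fin
proof (induction S rule: finite_induct)
  case empty
  have "p > 0" using p prime_gt_0_nat by blast
  then show ?case by (intro exI[of _ 0]) (simp add: zero_power)
next
  case (insert x F)
  then obtain r1 where r1: "(\<Sum>s\<in>F. f s) ^ p = (\<Sum>s\<in>F. f s ^ p) + of_nat p * r1" by blast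
  obtain r2 where r2: "(f x + (\<Sum>s\<in>F. f s)) ^ p = f x ^ p + (\<Sum>s\<in>F. f s) ^ p + of_nat p * r2"
    using frob_add[OF p] by blast
  show ?case
    by (rule exI[of _ "r1 + r2"]) (simp add: insert r2 r1 algebra_simps)
qed

definition ev :: "complex \<Rightarrow> int poly \<Rightarrow> complex" where
  "ev z F = poly (of_int_poly F) z"

lemma ev_add[simp]: "ev z (F + G) = ev z F + ev z G"
  by (simp add: ev_def of_int_poly_hom.hom_add)
lemma ev_mult[simp]: "ev z (F * G) = ev z F * ev z G"
  by (simp add: ev_def of_int_poly_hom.hom_mult)
lemma ev_power[simp]: "ev z (F ^ m) = ev z F ^ m"
  by (simp add: ev_def of_int_poly_hom.hom_power poly_power)
lemma ev_of_nat[simp]: "ev z (of_nat m) = of_nat m"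
  by (induction m) (simp_all add: ev_def of_int_poly_hom.hom_add)
lemma ev_X[simp]: "ev z [:0,1:] = z"
  by (simp add: ev_def)
lemma ev_sum: "finite S \<Longrightarrow> ev z (\<Sum>s\<in>S. F s) = (\<Sum>s\<in>S. ev z (F s))"
  by (induction S rule: finite_induct) (auto simp: ev_def of_int_poly_hom.hom_add)

lemma frob_poly:
  assumes p: "prime p" and fin: "finite S"
  shows "\<exists>R. \<forall>z. (\<Sum>s\<in>S. z ^ s) ^ p = (\<Sum>s\<in>S. z ^ (s * p)) + of_nat p * ev z R"
proof -
  obtain R where R: "(\<Sum>s\<in>S. [:0,1::int:] ^ s) ^ p = (\<Sum>s\<in>S. ([:0,1:] ^ s) ^ p) + of_nat p * R"
    using frob_sum[OF p fin, of "\<lambda>s. [:0,1::int:] ^ s"] by blast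
  have "(\<Sum>s\<in>S. z ^ s) ^ p = (\<Sum>s\<in>S. z ^ (s * p)) + of_nat p * ev z R" for z
  proof -
    have "ev z ((\<Sum>s\<in>S. [:0,1::int:] ^ s) ^ p) = ev z ((\<Sum>s\<in>S. ([:0,1:] ^ s) ^ p) + of_nat p * R)"
      using R by simp
    then show ?thesis using fin by (simp add: ev_sum power_mult)
  qed
  then show ?thesis by blast
qed

lemma trace_Ints:
  assumes n: "n > 0"
  shows "(\<Sum>j<n. ev (ee n (int j)) F) \<in> \<int>"
proof -
  define D where "D = degree F"
  have "ev z F = (\<Sum>i\<le>D. of_int (Polynomial.coeff F i) * z ^ i)" for z
  proof -
    have "ev z F = (\<Sum>i\<le>degree (of_int_poly F :: complex poly). Polynomial.coeff (of_int_poly F :: complex poly) i * z ^ i)"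
      unfolding ev_def by (rule poly_altdef)
    then show ?thesis by (simp add: D_def coeff_map_poly)
  qed
  then have "(\<Sum>j<n. ev (ee n (int j)) F) = (\<Sum>j<n. \<Sum>i\<le>D. of_int (Polynomial.coeff F i) * ee n (int j) ^ i)"
    by simp
  also have "\<dots> = (\<Sum>i\<le>D. of_int (Polynomial.coeff F i) * (\<Sum>j<n. ee n (int i) ^ j))"
  proof -
    have "ee n (int j) ^ i = ee n (int i) ^ j" for i j
      by (simp add: ee_pow mult.commute)
    then show ?thesis by (simp add: sum.swap[of _ "{..<n}"] sum_distrib_left)
  qed
  also have "\<dots> \<in> \<int>"
  proof (rule Ints_sum, rule Ints_mult)
    fix i
    show "of_int (Polynomial.coeff F i) \<in> \<int>" by simp
    have "ee n (int i) ^ n = 1" using ee_mult_n[OF n, of "int i"] by (simp add: ee_pow mult.commute)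
    then show "(\<Sum>j<n. ee n (int i) ^ j) \<in> \<int>"
      by (simp add: sum_gp_strict)
  qed
  finally show ?thesis .
qed

lemma trace_int:
  fixes a :: "nat \<Rightarrow> int"
  assumes p: "prime p" and n: "n > 0" and dv: "\<And>m. (int p) ^ m dvd (\<Sum>j<n. a j ^ m)"
  shows "\<forall>j<n. int p dvd a j"
proof -
  define q where "q = int p ^ Suc n"
  define m where "m = p ^ n * (p - 1)"
  have p2: "p \<ge> 2" using p prime_ge_2_nat by blast
  have pint: "prime (int p)" using p by simp
  have "n < 2 ^ n" by (rule less_exp)
  also have "(2::nat) ^ n \<le> p ^ n" using p2 by (simp add: power_mono)
  finally have "Suc n \<le> p ^ n" by simp
  also have "p ^ n \<le> m" unfolding m_def using p2 by simp
  finally have mge: "Suc n \<le> m" .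
  have qgt: "q > 1" unfolding q_def
  proof (rule one_less_power)
    show "1 < int p" using p2 by simp
  qed simp
  have cj: "[a j ^ m = (if int p dvd a j then 0 else 1)] (mod q)" for j
  proof (cases "int p dvd a j")
    case True
    have "q dvd a j ^ m" unfolding q_def using True mge by (rule dvd_power_le)
    then show ?thesis using True by (simp add: cong_0_iff)
  next
    case False
    have cop: "coprime (a j) q" unfolding q_def using prime_imp_power_coprime[OF pint False] .
    have res: "residues q" unfolding residues_def using qgt .
    have "[a j ^ totient (nat q) = 1] (mod q)" using residues.euler_theorem[OF res cop] .
    moreover have "nat q = p ^ Suc n" unfolding q_def by (simp only: of_nat_power[symmetric] nat_int)
    then have "totient (nat q) = m" unfolding m_def
      using totient_prime_power_Suc[OF p] by simp
    ultimately show ?thesis using False by simp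
  qed
  have "[(\<Sum>j<n. a j ^ m) = (\<Sum>j<n. (if int p dvd a j then 0 else 1))] (mod q)"
    by (rule cong_sum) (use cj in auto)
  moreover have "(\<Sum>j<n. (if int p dvd a j then 0 else 1::int)) = int (card {j\<in>{..<n}. \<not> int p dvd a j})"
  proof -
    have "{..<n} \<inter> - {j. int p dvd a j} = {j\<in>{..<n}. \<not> int p dvd a j}" by auto
    then show ?thesis by (simp add: sum.If_cases)
  qed
  moreover have "q dvd (\<Sum>j<n. a j ^ m)"
  proof -
    have "q dvd int p ^ m" unfolding q_def using mge by (rule le_imp_power_dvd)
    then show ?thesis using dv[of m] by (rule dvd_trans)
  qed
  ultimately have qd: "q dvd int (card {j\<in>{..<n}. \<not> int p dvd a j})"
    using cong_dvd_iff by metis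
  have cle: "card {j\<in>{..<n}. \<not> int p dvd a j} \<le> n"
    by (rule order_trans[OF card_mono[of "{..<n}"]]) auto
  have nq: "int n < q" unfolding q_def
  proof -
    have "n < 2 ^ n" by (rule less_exp)
    also have "(2::nat) ^ n \<le> p ^ n" using p2 by (simp add: power_mono)
    also have "p ^ n \<le> p ^ Suc n" using p2 by simp
    finally have "n < p ^ Suc n" .
    then have "int n < int (p ^ Suc n)" by (simp only: of_nat_less_iff)
    then show "int n < int p ^ Suc n" by (simp only: of_nat_power)
  qed
  have lt: "int (card {j\<in>{..<n}. \<not> int p dvd a j}) < q" using cle nq by linarith
  have "card {j\<in>{..<n}. \<not> int p dvd a j} = 0"
  proof (rule ccontr)
    assume "card {j\<in>{..<n}. \<not> int p dvd a j} \<noteq> 0"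
    then have "int (card {j\<in>{..<n}. \<not> int p dvd a j}) > 0" by (simp only: of_nat_0_less_iff neq0_conv)
    from zdvd_imp_le[OF qd this] lt show False by simp
  qed
  then show ?thesis by auto
qed

lemma lam_periodic:
  assumes n: "n > 0" shows "lam n S (j mod int n) = lam n S j"
  unfolding lam_def
proof (rule sum.cong[OF refl])
  fix s show "ee n (j mod int n * int s) = ee n (j * int s)"
    by (rule ee_cong[OF n]) (simp add: mod_mult_left_eq)
qed

lemma lam_norm: "norm (lam n S j) \<le> card S"
proof (cases "finite S")
  case True
  have "norm (lam n S j) \<le> (\<Sum>s\<in>S. norm (ee n (j * int s)))"
    unfolding lam_def by (rule norm_sum)
  also have "\<dots> = card S" by simp
  finally show ?thesis .
qed (simp add: lam_def)

lemma fermat_int: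
  assumes p: "prime p" shows "[x ^ p = x] (mod int p)"
proof (cases "int p dvd x")
  case True
  have p0: "p > 0" using p prime_gt_0_nat by blast
  have "int p dvd x ^ p" using dvd_trans[OF True dvd_power[of p x]] p0 by simp
  then show ?thesis using True by (simp add: cong_iff_dvd_diff dvd_diff)
next
  case False
  have pint: "prime (int p)" using p by simp
  have cop: "coprime x (int p)" using prime_imp_coprime[OF pint False] by (simp add: coprime_commute)
  have res: "residues (int p)" unfolding residues_def using p prime_gt_1_nat by simp
  have "[x ^ totient (nat (int p)) = 1] (mod int p)" using residues.euler_theorem[OF res cop] .
  then have e: "[x ^ (p - 1) = 1] (mod int p)" using totient_prime[OF p] by simp
  have "[x ^ (p - 1) * x = 1 * x] (mod int p)" by (rule cong_mult[OF e cong_refl])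
  moreover have "x ^ (p - 1) * x = x ^ p"
  proof -
    have "x ^ (p - 1) * x = x ^ (Suc (p - 1))" by (simp only: power_Suc2)
    also have "Suc (p - 1) = p" using p prime_gt_0_nat by simp
    finally show ?thesis .
  qed
  ultimately show ?thesis by simp
qed

lemma lam_frob:
  assumes n: "n > 0" and fin: "finite S" and p: "prime p"
    and ints: "\<And>j. lam n S j \<in> \<int>" and big: "2 * card S < p"
  shows "lam n S (int p * j) = lam n S j"
proof -
  define L where "L j = (SOME x. lam n S j = of_int x)" for j
  have L: "lam n S j = of_int (L j)" for j
  proof -
    obtain x where "lam n S j = of_int x" using ints[of j] by (auto elim: Ints_cases)
    then show ?thesis unfolding L_def by (rule someI)
  qed
  obtain R where R: "\<And>z. (\<Sum>s\<in>S. z ^ s) ^ p = (\<Sum>s\<in>S. z ^ (s * p)) + of_nat p * ev z R"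
    using frob_poly[OF p fin] by blast
  have key: "(\<Sum>s\<in>S. ee n (int j) ^ s) = lam n S (int j)"
    "(\<Sum>s\<in>S. ee n (int j) ^ (s * p)) = lam n S (int p * int j)" for j
    unfolding lam_def by (simp_all add: ee_pow mult_ac)
  define a where "a j = L (int j) ^ p - L (int p * int j)" for j
  have a_eq: "of_int (a j) = of_nat p * ev (ee n (int j)) R" for j
  proof -
    have "lam n S (int j) ^ p = lam n S (int p * int j) + of_nat p * ev (ee n (int j)) R"
      using R[of "ee n (int j)"] key[of j] by simp
    then show ?thesis unfolding a_def by (simp add: L)
  qed
  have "\<forall>j<n. int p dvd a j"
  proof (rule trace_int[OF p n])
    fix m
    obtain x where x: "(\<Sum>j<n. ev (ee n (int j)) (R ^ m)) = of_int x"
      using trace_Ints[OF n, of "R ^ m"] by (auto elim: Ints_cases)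
    have "(of_int (\<Sum>j<n. a j ^ m) :: complex) = of_nat p ^ m * (\<Sum>j<n. ev (ee n (int j)) (R ^ m))"
      by (simp add: a_eq power_mult_distrib sum_distrib_left)
    also have "\<dots> = of_int (int p ^ m * x)" using x by simp
    finally have "(\<Sum>j<n. a j ^ m) = int p ^ m * x" by (simp only: of_int_eq_iff)
    then show "int p ^ m dvd (\<Sum>j<n. a j ^ m)" by simp
  qed
  define j0 where "j0 = nat (j mod int n)"
  have j0n: "j0 < n" using n unfolding j0_def by (simp add: nat_less_iff)
  have j0eq: "int j0 = j mod int n" using n unfolding j0_def by simp
  have l1: "lam n S j = lam n S (int j0)" using lam_periodic[OF n, of S j] j0eq by simp
  have l2: "lam n S (int p * j) = lam n S (int p * int j0)"
  proof -
    have "(int p * j) mod int n = (int p * int j0) mod int n" using j0eq by (simp add: mod_mult_right_eq)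
    then show ?thesis using lam_periodic[OF n, of S "int p * j"] lam_periodic[OF n, of S "int p * int j0"] by simp
  qed
  have d1: "int p dvd a j0" using \<open>\<forall>j<n. int p dvd a j\<close> j0n by blast
  have "[L (int j0) ^ p = L (int p * int j0)] (mod int p)"
    using d1 unfolding a_def by (simp add: cong_iff_dvd_diff)
  moreover have "[L (int j0) ^ p = L (int j0)] (mod int p)" by (rule fermat_int[OF p])
  ultimately have "[L (int j0) = L (int p * int j0)] (mod int p)"
    using cong_trans cong_sym by blast
  then have dv: "int p dvd L (int j0) - L (int p * int j0)" by (simp add: cong_iff_dvd_diff)
  have b1: "\<bar>L x\<bar> \<le> int (card S)" for x
  proof -
    have "norm (lam n S x) \<le> card S" by (rule lam_norm)
    then have "\<bar>real_of_int (L x)\<bar> \<le> real (card S)" by (simp add: L)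
    then show ?thesis by linarith
  qed
  have "L (int j0) - L (int p * int j0) = 0"
  proof (rule ccontr)
    assume ne: "L (int j0) - L (int p * int j0) \<noteq> 0"
    have "\<bar>int p\<bar> \<le> \<bar>L (int j0) - L (int p * int j0)\<bar>" by (rule dvd_imp_le_int[OF ne dv])
    moreover have "\<bar>L (int j0) - L (int p * int j0)\<bar> \<le> 2 * int (card S)"
      using b1[of "int j0"] b1[of "int p * int j0"] by linarith
    ultimately show False using big by linarith
  qed
  then have "lam n S (int j0) = lam n S (int p * int j0)" by (simp add: L)
  then show ?thesis using l1 l2 by simp
qed

lemma mod_neg_mult_cong:
  fixes a b m x :: int
  assumes "a mod m = b mod m"
  shows "(- (a * x)) mod m = (- (b * x)) mod m"
proof -
  have "m dvd a - b" using assms by (simp add: mod_eq_dvd_iff)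
  then have "m dvd (a - b) * x" by simp
  then have "m dvd - (a * x) - - (b * x)"
    by (metis (no_types) dvd_minus_iff minus_diff_eq left_diff_distrib diff_minus_eq_add uminus_add_conv_diff)
  then show ?thesis by (simp add: mod_eq_dvd_iff)
qed

lemma lam_N:
  assumes n: "n > 0" and fin: "finite S" and ints: "\<And>j. lam n S j \<in> \<int>"
  shows "N > 0 \<Longrightarrow> (\<forall>q. prime q \<and> q dvd N \<longrightarrow> 2 * card S < q) \<Longrightarrow> lam n S (int N * j) = lam n S j"
proof (induction N arbitrary: j rule: less_induct)
  case (less N)
  show ?case
  proof (cases "N = 1")
    case True then show ?thesis by simp
  next
    case False
    obtain q where q: "prime q" "q dvd N" using prime_factor_nat[OF False] by blast
    obtain N' where N': "N = q * N'" using q(2) by (auto elim: dvdE)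
    have N'pos: "N' > 0" using less.prems(1) N' by (cases "N' = 0") auto
    have q2: "q \<ge> 2" using q(1) prime_ge_2_nat by blast
    have N'lt: "N' < N" using N' q2 N'pos by simp
    have pf: "\<forall>r. prime r \<and> r dvd N' \<longrightarrow> 2 * card S < r"
      using less.prems(2) N' by (auto intro: dvd_mult)
    have IH: "lam n S (int N' * j) = lam n S j" using less.IH[OF N'lt N'pos pf] .
    have big: "2 * card S < q" using less.prems(2) q by blast
    have "lam n S (int q * (int N' * j)) = lam n S (int N' * j)"
      by (rule lam_frob[OF n fin q(1) ints big])
    moreover have e: "int N * j = int q * (int N' * j)" using N' by simp
    ultimately show ?thesis using IH by (simp only: e)
  qed
qed

lemma fourier:
  assumes n: "n > 0" and S: "S \<subseteq> {..<n}"
  shows "(\<Sum>j<n. lam n S (int j) * ee n (- (int j * x))) = (if nat (x mod int n) \<in> S then of_nat n else 0)"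
proof -
  have fin: "finite S" using S finite_subset by blast
  have t1: "lam n S (int j) * ee n (- (int j * x)) = (\<Sum>s\<in>S. ee n (int s - x) ^ j)" for j
  proof -
    have "ee n (int j * int s) * ee n (- (int j * x)) = ee n (int s - x) ^ j" for s
      by (simp add: ee_add[symmetric] ee_pow algebra_simps)
    then show ?thesis unfolding lam_def by (simp add: sum_distrib_right)
  qed
  have t2: "(\<Sum>j<n. ee n (int s - x) ^ j) = (if s = nat (x mod int n) then of_nat n else 0)" if "s \<in> S" for s
  proof -
    have sn: "s < n" using S that by auto
    have "int n dvd (int s - x) \<longleftrightarrow> int s mod int n = x mod int n" by (simp add: mod_eq_dvd_iff)
    also have "\<dots> \<longleftrightarrow> s = nat (x mod int n)" using sn n by auto
    finally have iff: "ee n (int s - x) = 1 \<longleftrightarrow> s = nat (x mod int n)" using ee_eq_1[OF n] by simp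
    have pw: "ee n (int s - x) ^ n = 1" using ee_mult_n[OF n, of "int s - x"] by (simp add: ee_pow mult.commute)
    show ?thesis
    proof (cases "s = nat (x mod int n)")
      case True
      then have w1: "ee n (int s - x) = 1" using iff by blast
      show ?thesis by (subst if_P[OF True]) (simp add: w1)
    next
      case False
      then have w0: "ee n (int s - x) \<noteq> 1" using iff by blast
      show ?thesis by (subst if_not_P[OF False]) (simp add: sum_gp_strict w0 pw)
    qed
  qed
  have "(\<Sum>j<n. lam n S (int j) * ee n (- (int j * x))) = (\<Sum>j<n. \<Sum>s\<in>S. ee n (int s - x) ^ j)"
    using t1 by simp
  also have "\<dots> = (\<Sum>s\<in>S. \<Sum>j<n. ee n (int s - x) ^ j)" by (rule sum.swap)
  also have "\<dots> = (\<Sum>s\<in>S. if s = nat (x mod int n) then of_nat n else 0)"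
    using t2 by (rule sum.cong[OF refl])
  also have "\<dots> = (if nat (x mod int n) \<in> S then of_nat n else 0)"
    using fin by (simp add: sum.delta')
  finally show ?thesis .
qed

lemma mult_perm:
  fixes N n :: nat
  assumes n: "n > 0" and cop: "coprime N n"
  shows "(\<lambda>j. N * j mod n) ` {..<n} = {..<n}" "inj_on (\<lambda>j. N * j mod n) {..<n}"
proof -
  show inj: "inj_on (\<lambda>j. N * j mod n) {..<n}"
  proof (rule inj_onI)
    fix a b assume a: "a \<in> {..<n}" and b: "b \<in> {..<n}" and e: "N * a mod n = N * b mod n"
    have "[N * a = N * b] (mod n)" using e by (simp add: cong_def)
    then have "[a = b] (mod n)" using cong_mult_lcancel_nat[OF cop] by simp
    then show "a = b" using a b by (auto intro: cong_less_modulus_unique_nat)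
  qed
  have sub: "(\<lambda>j. N * j mod n) ` {..<n} \<subseteq> {..<n}" using n by auto
  have "card ((\<lambda>j. N * j mod n) ` {..<n}) = card {..<n}" using card_image[OF inj] .
  then show "(\<lambda>j. N * j mod n) ` {..<n} = {..<n}" using card_subset_eq[OF _ sub] by simp
qed

lemma inv_mult:
  assumes n: "n > 0" and S: "S \<subseteq> {..<n}" and ints: "\<And>j. lam n S j \<in> \<int>"
    and N: "N > 0" "coprime N n" "\<forall>q. prime q \<and> q dvd N \<longrightarrow> 2 * card S < q"
  shows "nat ((int N * x) mod int n) \<in> S \<longleftrightarrow> nat (x mod int n) \<in> S"
proof -
  have fin: "finite S" using S finite_subset by blast
  define g where "g t = lam n S (int t) * ee n (- (int t * x))" for t
  define h where "h j = N * j mod n" for j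
  have "(\<Sum>j<n. lam n S (int j) * ee n (- (int j * (int N * x))))
        = (\<Sum>j<n. g (h j))"
  proof (rule sum.cong[OF refl])
    fix j
    have "lam n S (int j) = lam n S (int N * int j)" using lam_N[OF n fin ints N(1) N(3)] by simp
    also have "\<dots> = lam n S (int (h j))"
      using lam_periodic[OF n, of S "int N * int j"] n by (simp add: h_def of_nat_mod)
    finally have l: "lam n S (int j) = lam n S (int (h j))" .
    have "ee n (- (int j * (int N * x))) = ee n (- (int (h j) * x))"
    proof (rule ee_cong[OF n])
      have "int (h j) = (int N * int j) mod int n" by (simp add: h_def of_nat_mod)
      then have "(int N * int j) mod int n = int (h j) mod int n" by simp
      then have "(- ((int N * int j) * x)) mod int n = (- (int (h j) * x)) mod int n"
        by (rule mod_neg_mult_cong)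
      then show "- (int j * (int N * x)) mod int n = - (int (h j) * x) mod int n"
        by (simp add: mult_ac)
    qed
    then show "lam n S (int j) * ee n (- (int j * (int N * x))) = g (h j)"
      using l by (simp add: g_def)
  qed
  also have "\<dots> = sum g {..<n}"
  proof -
    have inj: "inj_on h {..<n}" and img: "h ` {..<n} = {..<n}"
      using mult_perm[OF n N(2)] unfolding h_def by auto
    have "sum g {..<n} = sum g (h ` {..<n})" using img by simp
    also have "\<dots> = sum (g \<circ> h) {..<n}" by (rule sum.reindex[OF inj])
    finally show ?thesis by (simp add: comp_def)
  qed
  finally have eq: "(\<Sum>j<n. lam n S (int j) * ee n (- (int j * (int N * x)))) = sum g {..<n}" .
  have "(if nat ((int N * x) mod int n) \<in> S then (of_nat n :: complex) else 0)
      = (if nat (x mod int n) \<in> S then of_nat n else 0)"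
    using eq fourier[OF n S, of "int N * x"] fourier[OF n S, of x] by (simp add: g_def)
  then show ?thesis using n by (auto split: if_splits)
qed

lemma lift_unit:
  fixes a d n B :: nat
  assumes cop: "coprime a d" and n: "n > 0"
  shows "\<exists>N. N > 0 \<and> [N = a] (mod d) \<and> coprime N n \<and> (\<forall>q. prime q \<and> q dvd N \<longrightarrow> B < q)"
proof -
  define M where "M = max B n"
  define Q where "Q = {q. prime q \<and> q \<le> M \<and> \<not> q dvd a}"
  define P where "P = \<Prod>Q"
  define N where "N = a + d * P"
  have finQ: "finite Q" unfolding Q_def by simp
  have Ppos: "P > 0" unfolding P_def using finQ
    by (intro prod_pos) (auto simp: Q_def prime_gt_0_nat)
  have big: "M < q" if q: "prime q" "q dvd N" for q
  proof (rule ccontr)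
    assume "\<not> M < q"
    then have qM: "q \<le> M" by simp
    show False
    proof (cases "q dvd a")
      case True
      then have "q dvd d * P" using q(2) unfolding N_def by (simp add: dvd_add_right_iff)
      then have "q dvd d \<or> q dvd P" using q(1) by (simp add: prime_dvd_mult_iff)
      then show False
      proof
        assume "q dvd d"
        then have "is_unit q" using coprime_common_divisor[OF cop True] by simp
        then show False using q(1) by simp
      next
        assume "q dvd P"
        then obtain r where r: "r \<in> Q" "q dvd r" using prime_dvd_prod_iff[OF finQ q(1), of id]
          unfolding P_def by auto
        then have "q = r" using q(1) by (intro primes_dvd_imp_eq) (auto simp: Q_def)
        then show False using r True by (auto simp: Q_def)
      qed
    next
      case False
      then have "q \<in> Q" using q qM by (simp add: Q_def)
      then have "q dvd P" unfolding P_def using dvd_prodI[OF finQ, of q "\<lambda>x. x"] by simp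
      then have "q dvd d * P" by simp
      then have "q dvd a" using q(2) unfolding N_def by (simp add: dvd_add_left_iff)
      then show False using False by simp
    qed
  qed
  have Npos: "N > 0"
  proof (cases "d = 0")
    case True then have "a = 1" using cop by simp
    then show ?thesis unfolding N_def by simp
  next
    case False then show ?thesis unfolding N_def using Ppos by simp
  qed
  have cong: "[N = a] (mod d)" unfolding N_def by (simp add: cong_def)
  have copN: "coprime N n"
  proof (rule ccontr)
    assume "\<not> coprime N n"
    then have g1: "gcd N n \<noteq> 1" using coprime_iff_gcd_eq_1 by blast
    obtain q where q: "prime q" "q dvd gcd N n" using prime_factor_nat[OF g1] by blast
    have qN: "q dvd N" using dvd_trans[OF q(2) gcd_dvd1] .
    have qn: "q dvd n" using dvd_trans[OF q(2) gcd_dvd2] .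
    have "q \<le> n" using dvd_imp_le[OF qn n] .
    moreover have "M < q" using big[OF q(1) qN] .
    moreover have "n \<le> M" unfolding M_def by simp
    ultimately show False by linarith
  qed
  show ?thesis using Npos cong copN big unfolding M_def by (intro exI[of _ N]) auto
qed

lemma class_closed:
  assumes n: "n > 0" and S: "S \<subseteq> {..<n}" and ints: "\<And>j. lam n S j \<in> \<int>"
    and s: "s \<in> S" "s > 0" and t: "t < n" and g: "gcd t n = gcd s n"
  shows "t \<in> S"
proof -
  define gg where "gg = gcd s n"
  define d where "d = n div gg"
  have ggpos: "gg > 0" unfolding gg_def using n by simp
  have nd: "n = gg * d" unfolding d_def gg_def by simp
  define s' where "s' = s div gg"
  define t' where "t' = t div gg"
  have ss: "s = gg * s'" unfolding s'_def gg_def by simp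
  have tt: "t = gg * t'" unfolding t'_def using dvd_mult_div_cancel[of gg t] g gcd_dvd1[of t n] unfolding gg_def by simp
  have cs: "coprime s' d" unfolding s'_def d_def gg_def using div_gcd_coprime n by blast
  have ct: "coprime t' d" unfolding t'_def d_def gg_def using div_gcd_coprime[of t n] n g by simp
  obtain x where x: "[s' * x = 1] (mod d)" using cong_solve_coprime_nat[OF cs] by auto
  have "[x * s' = Suc 0] (mod d)" using x by (simp add: mult.commute)
  then have cx: "coprime x d" using coprime_iff_invertible_nat[of x d] by blast
  have ca: "coprime (t' * x) d" using ct cx by simp
  obtain N where N: "N > 0" "[N = t' * x] (mod d)" "coprime N n"
      "\<forall>q. prime q \<and> q dvd N \<longrightarrow> 2 * card S < q"
    using lift_unit[OF ca n, of "2 * card S"] by blast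
  have "[N * s' = t' * x * s'] (mod d)" using N(2) by (rule cong_mult) simp
  moreover have "[t' * x * s' = t' * 1] (mod d)"
    using cong_mult[OF cong_refl[of t'] x] by (simp add: mult_ac)
  ultimately have "[N * s' = t'] (mod d)" using cong_trans by simp
  then have "(N * s') mod d = t' mod d" by (simp add: cong_def)
  then have "gg * ((N * s') mod d) = gg * (t' mod d)" by simp
  then have "(gg * (N * s')) mod n = (gg * t') mod n" unfolding nd by (simp only: mod_mult_mult1)
  then have Ns: "(N * s) mod n = t" using t tt ss by (simp add: mult_ac)
  have "nat ((int N * int s) mod int n) \<in> S \<longleftrightarrow> nat (int s mod int n) \<in> S"
    by (rule inv_mult[OF n S ints N(1) N(3) N(4)])
  moreover have "int ((N * s) mod n) = (int N * int s) mod int n" by (simp add: of_nat_mod)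
  then have "nat ((int N * int s) mod int n) = t" using Ns by simp
  moreover have "int s mod int n = int s" using S s(1) by auto
  then have "nat (int s mod int n) = s" by simp
  ultimately show ?thesis using s(1) by simp
qed

lemma conn_prime:
  assumes n: "n > 0" and conn: "connected_circulant n S" and p: "prime p" "p dvd n"
  shows "\<exists>s\<in>S. \<not> p dvd s"
proof (rule ccontr)
  assume "\<not> (\<exists>s\<in>S. \<not> p dvd s)"
  then have all: "\<forall>s\<in>S. p dvd s" by blast
  have pn: "int p dvd int n" using p(2) by simp
  have step: "[i = j] (mod p)" if "circ_adj n S i j" for i j
  proof -
    define X where "X = (int i - int j) mod int n"
    have X0: "X \<ge> 0" unfolding X_def using n by simp
    from that have "nat X \<in> S" by (simp add: circ_adj_def X_def)
    then have "p dvd nat X" using all by blast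
    then have "int p dvd int (nat X)" by (simp only: int_dvd_int_iff)
    then have "int p dvd X" using X0 by simp
    then have "X mod int p = 0" by simp
    moreover have "X mod int p = (int i - int j) mod int p" unfolding X_def by (rule mod_mod_cancel[OF pn])
    ultimately have "int p dvd (int i - int j)" by (simp add: dvd_eq_mod_eq_0)
    then have "[int i = int j] (mod int p)" by (simp add: cong_iff_dvd_diff)
    then show ?thesis by (simp add: cong_int_iff)
  qed
  have reach: "[i = j] (mod p)" if "(circ_adj n S)\<^sup>*\<^sup>* i j" for i j
    using that
  proof (induction rule: rtranclp_induct)
    case base then show ?case by simp
  next
    case (step y z) then show ?case using step(2)[THEN \<open>\<And>i j. circ_adj n S i j \<Longrightarrow> [i = j] (mod p)\<close>]
      using cong_trans by blast
  qed
  have p2: "p \<ge> 2" using p(1) prime_ge_2_nat by blast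
  have "p \<le> n" using dvd_imp_le[OF p(2) n] .
  then have "0 < n" "1 < n" using p2 by auto
  then have "(circ_adj n S)\<^sup>*\<^sup>* 0 1" using conn unfolding connected_circulant_def by blast
  then have "[0 = 1] (mod p)" by (rule reach)
  then show False using p2 by (simp add: cong_def)
qed

lemma prod_ge_sum_nat:
  fixes f :: "'a \<Rightarrow> nat"
  assumes "finite A" "\<forall>x\<in>A. 2 \<le> f x"
  shows "sum f A \<le> prod f A"
  using assms
proof (induction A rule: finite_induct)
  case empty then show ?case by simp
next
  case (insert x F)
  have IH: "sum f F \<le> prod f F" using insert by simp
  have fx: "f x \<ge> 2" using insert by simp
  show ?case
  proof (cases "F = {}")
    case True then show ?thesis by simp
  next
    case False
    then obtain y where y: "y \<in> F" by blast
    have "prod f F = f y * prod f (F - {y})" using insert(1) y by (simp add: prod.remove)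
    moreover have "prod f (F - {y}) \<ge> 1" using insert by (intro prod_ge_1) auto
    moreover have "f y \<ge> 2" using insert y by simp
    ultimately have P2: "prod f F \<ge> 2"
      by (metis mult_le_mono nat_mult_1_right)
    have a: "f x * prod f F \<ge> 2 * prod f F" using fx by (rule mult_le_mono1)
    have b: "f x * prod f F \<ge> f x * 2" using P2 by (rule mult_le_mono2)
    have "sum f (insert x F) = f x + sum f F" using insert by simp
    also have "\<dots> \<le> f x + prod f F" using IH by simp
    also have "\<dots> \<le> f x * prod f F" using a b by linarith
    also have "\<dots> = prod f (insert x F)" using insert by simp
    finally show ?thesis .
  qed
qed

lemma sum_lessThan_card:
  fixes A :: "nat set"
  assumes "finite A"
  shows "(\<Sum>i<card A. i) \<le> \<Sum>A"
  using assms
proof (induction "card A" arbitrary: A)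
  case 0 then show ?case by simp
next
  case (Suc m)
  then have ne: "A \<noteq> {}" by auto
  define M where "M = Max A"
  have MA: "M \<in> A" unfolding M_def using Suc.prems ne by simp
  have cA': "card (A - {M}) = m" using Suc.hyps(2) MA Suc.prems by simp
  have IH: "(\<Sum>i<m. i) \<le> \<Sum>(A - {M})" using Suc.hyps(1)[OF cA'[symmetric]] Suc.prems cA' by simp
  have "A \<subseteq> {..M}" unfolding M_def using Suc.prems by auto
  then have "card A \<le> card {..M}" by (rule card_mono[rotated]) simp
  then have mM: "m \<le> M" using Suc.hyps(2) by simp
  have "\<Sum>A = M + \<Sum>(A - {M})" using Suc.prems MA by (simp add: sum.remove)
  moreover have "(\<Sum>i<Suc m. i) = (\<Sum>i<m. i) + m" by simp
  ultimately show ?case using IH mM Suc.hyps(2) by simp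
qed

lemma gauss2: "2 * (\<Sum>i<r. i) + r = r * (r::nat)"
proof (induction r)
  case (Suc r) then show ?case by (simp add: algebra_simps)
qed simp

lemma totient_ge_sum:
  assumes d: "d > 0" and A: "A \<subseteq> prime_factors d" and odd: "\<forall>p\<in>A. p \<noteq> 2"
  shows "(\<Sum>p\<in>A. p - 1) \<le> totient d"
proof -
  have fin: "finite (prime_factors d)" by simp
  have pr: "prime p" if "p \<in> prime_factors d" for p using that by (simp add: in_prime_factors_iff)
  have "(\<Sum>p\<in>A. p - 1) \<le> (\<Prod>p\<in>A. p - 1)"
  proof (rule prod_ge_sum_nat)
    show "finite A" using A fin finite_subset by blast
    show "\<forall>x\<in>A. 2 \<le> x - 1"
    proof
      fix x assume x: "x \<in> A"
      then have "prime x" "x \<noteq> 2" using A pr odd by auto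
      then have "x \<ge> 3" using prime_ge_2_nat[of x] by linarith
      then show "2 \<le> x - 1" by simp
    qed
  qed
  also have "\<dots> \<le> (\<Prod>p\<in>prime_factors d - A. p - 1) * (\<Prod>p\<in>A. p - 1)"
  proof -
    have "(\<Prod>p\<in>prime_factors d - A. p - 1) \<ge> 1"
    proof (rule prod_ge_1)
      fix x assume "x \<in> prime_factors d - A"
      then have "prime x" using pr by auto
      then show "1 \<le> x - 1" using prime_ge_2_nat[of x] by linarith
    qed
    then show ?thesis by simp
  qed
  also have "\<dots> = (\<Prod>p\<in>prime_factors d. p - 1)"
    using prod.subset_diff[OF A fin, of "\<lambda>p. p - 1"] by simp
  also have "\<dots> \<le> (\<Prod>p\<in>prime_factors d. p ^ (multiplicity p d - 1) * (p - 1))"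
  proof (rule prod_mono)
    fix p assume "p \<in> prime_factors d"
    then have "p > 0" using pr prime_gt_0_nat by blast
    then have "p ^ (multiplicity p d - 1) \<ge> 1" by simp
    then show "0 \<le> p - 1 \<and> p - 1 \<le> p ^ (multiplicity p d - 1) * (p - 1)" by simp
  qed
  also have "\<dots> = totient d" using totient_formula1[OF d] by simp
  finally show ?thesis .
qed

lemma comb_bound:
  fixes n k :: nat and S :: "nat set"
  assumes n: "n > 0" and S: "S \<subseteq> {1..<n}" and k: "card S = k" and k1: "k \<ge> 1"
    and clos: "\<And>s t. s \<in> S \<Longrightarrow> t < n \<Longrightarrow> gcd t n = gcd s n \<Longrightarrow> t \<in> S"
    and conn: "\<And>p. prime p \<Longrightarrow> p dvd n \<Longrightarrow> \<exists>s\<in>S. \<not> p dvd s"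
  shows "\<exists>r. r * r \<le> 2 * k + r \<and> n \<le> (2 * k) ^ (r + 1)"
proof -
  have finS: "finite S" using S finite_subset by blast
  define C where "C g = {t\<in>{0<..n}. gcd t n = g}" for g
  have CS: "C (gcd s n) \<subseteq> S" if s: "s \<in> S" for s
  proof
    fix t assume "t \<in> C (gcd s n)"
    then have t: "0 < t" "t \<le> n" "gcd t n = gcd s n" by (auto simp: C_def)
    have sn: "0 < s" "s < n" using s S by auto
    have "t \<noteq> n"
    proof
      assume "t = n"
      then have "gcd s n = n" using t(3) by simp
      then have "n dvd s" by (metis gcd_dvd1)
      then show False using sn dvd_imp_le by fastforce
    qed
    then show "t \<in> S" using clos[OF s _ t(3)] t(2) by simp
  qed
  have cardC: "card (C g) = totient (n div g)" if "g dvd n" for g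
    unfolding C_def using card_gcd_eq_totient[OF n that] .
  have totk: "totient (n div gcd s n) \<le> k" if s: "s \<in> S" for s
  proof -
    have "card (C (gcd s n)) \<le> card S" by (rule card_mono[OF finS CS[OF s]])
    then show ?thesis using cardC[of "gcd s n"] k by simp
  qed
  have pdg: "p dvd n div gcd s n" if p: "prime p" "p dvd n" and s: "\<not> p dvd s" for p s
  proof -
    have ng: "\<not> p dvd gcd s n"
    proof
      assume "p dvd gcd s n"
      then show False using s dvd_trans[OF \<open>p dvd gcd s n\<close> gcd_dvd1[of s n]] by simp
    qed
    have "n = (n div gcd s n) * gcd s n" by simp
    then have prod: "p dvd (n div gcd s n) * gcd s n" using p(2) by metis
    have "p dvd n div gcd s n \<or> p dvd gcd s n" by (rule prime_dvd_multD[OF p(1) prod])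
    then show ?thesis using ng by blast
  qed
  have ppow: "p ^ multiplicity p n \<le> 2 * k" if pf: "p \<in> prime_factors n" for p
  proof -
    have p: "prime p" "p dvd n" using pf by (auto simp: in_prime_factors_iff)
    obtain s where s: "s \<in> S" "\<not> p dvd s" using conn[OF p] by blast
    define g where "g = gcd s n"
    define e where "e = multiplicity p n"
    have ng: "\<not> p dvd g" unfolding g_def using s(2) dvd_trans[OF _ gcd_dvd1] by blast
    have e0: "e > 0" unfolding e_def using p n by (simp add: prime_multiplicity_gt_zero_iff)
    have "p ^ e dvd n" unfolding e_def by (rule multiplicity_dvd)
    moreover have "n = (n div g) * g" unfolding g_def by simp
    ultimately have "p ^ e dvd (n div g) * g" by metis
    moreover have "coprime (p ^ e) g" using prime_imp_power_coprime[OF p(1) ng] by (simp add: coprime_commute)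
    ultimately have pe: "p ^ e dvd n div g" by (simp add: coprime_dvd_mult_left_iff)
    have ndg: "n div g > 0" unfolding g_def using n by (simp add: div_greater_zero_iff gcd_le2_nat)
    have "totient (p ^ e) \<le> totient (n div g)" by (rule totient_dvd_mono[OF pe ndg])
    also have "\<dots> \<le> k" unfolding g_def by (rule totk[OF s(1)])
    finally have tk: "totient (p ^ e) \<le> k" .
    have "totient (p ^ e) = p ^ (e - 1) * (p - 1)" by (rule totient_prime_power[OF p(1) e0])
    moreover have "p ^ e = p ^ (e - 1) * p" using e0 by (metis Suc_diff_1 power_Suc2)
    moreover have "p ^ (e - 1) * p \<le> p ^ (e - 1) * (2 * (p - 1))"
      using prime_ge_2_nat[OF p(1)] by (intro mult_le_mono2) linarith
    ultimately have "p ^ e \<le> 2 * totient (p ^ e)" by simp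
    then show ?thesis using tk unfolding e_def by linarith
  qed
  define P where "P = {p\<in>prime_factors n. p \<noteq> 2}"
  define G where "G = (\<lambda>s. gcd s n) ` S"
  have finP: "finite P" unfolding P_def by simp
  have finG: "finite G" unfolding G_def using finS by simp
  have sumP: "(\<Sum>p\<in>P. p - 1) \<le> k"
  proof -
    have "(\<Sum>p\<in>P. p - 1) \<le> (\<Sum>p\<in>P. \<Sum>g\<in>G. if p dvd n div g then p - 1 else 0)"
    proof (rule sum_mono)
      fix p assume pP: "p \<in> P"
      then have p: "prime p" "p dvd n" by (auto simp: P_def in_prime_factors_iff)
      obtain s where s: "s \<in> S" "\<not> p dvd s" using conn[OF p] by blast
      have gG: "gcd s n \<in> G" unfolding G_def using s(1) by blast
      have "(if p dvd n div gcd s n then p - 1 else 0) \<le> (\<Sum>g\<in>G. if p dvd n div g then p - 1 else 0)"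
        by (rule member_le_sum[OF gG _ finG]) simp
      then show "p - 1 \<le> (\<Sum>g\<in>G. if p dvd n div g then p - 1 else 0)"
        using pdg[OF p s(2)] by simp
    qed
    also have "\<dots> = (\<Sum>g\<in>G. \<Sum>p\<in>P. if p dvd n div g then p - 1 else 0)" by (rule sum.swap)
    also have "\<dots> = (\<Sum>g\<in>G. \<Sum>p\<in>{p\<in>P. p dvd n div g}. p - 1)"
    proof (rule sum.cong[OF refl])
      fix g
      show "(\<Sum>p\<in>P. if p dvd n div g then p - 1 else 0) = (\<Sum>p\<in>{p\<in>P. p dvd n div g}. p - 1)"
        by (rule sum.inter_filter[OF finP, symmetric])
    qed
    also have "\<dots> \<le> (\<Sum>g\<in>G. totient (n div g))"
    proof (rule sum_mono)
      fix g assume "g \<in> G"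
      then obtain s where s: "s \<in> S" "g = gcd s n" unfolding G_def by blast
      have ndg: "n div g > 0" unfolding s(2) using n by (simp add: div_greater_zero_iff gcd_le2_nat)
      show "(\<Sum>p\<in>{p\<in>P. p dvd n div g}. p - 1) \<le> totient (n div g)"
      proof (rule totient_ge_sum[OF ndg])
        show "{p \<in> P. p dvd n div g} \<subseteq> prime_factors (n div g)"
          using ndg by (auto simp: P_def in_prime_factors_iff)
        show "\<forall>p\<in>{p \<in> P. p dvd n div g}. p \<noteq> 2" by (auto simp: P_def)
      qed
    qed
    also have "\<dots> = (\<Sum>g\<in>G. card (C g))"
    proof (rule sum.cong[OF refl])
      fix g assume "g \<in> G"
      then obtain s where s: "g = gcd s n" unfolding G_def by blast
      show "totient (n div g) = card (C g)" using cardC[of g] s by simp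
    qed
    also have "\<dots> = card (\<Union>g\<in>G. C g)"
      by (rule card_UN_disjoint[symmetric]) (use finG in \<open>auto simp: C_def\<close>)
    also have "\<dots> \<le> card S"
    proof (rule card_mono[OF finS])
      show "(\<Union>g\<in>G. C g) \<subseteq> S" using CS unfolding G_def by blast
    qed
    finally show ?thesis using k by simp
  qed
  define r where "r = card P"
  have "(\<Sum>i<r. i) \<le> (\<Sum>p\<in>P. p - 1)"
  proof -
    have inj: "inj_on (\<lambda>p. p - 1) P"
    proof (rule inj_onI)
      fix x y assume "x \<in> P" "y \<in> P" "x - 1 = y - 1"
      moreover have "x \<ge> 1" "y \<ge> 1" using \<open>x \<in> P\<close> \<open>y \<in> P\<close>
        by (auto simp: P_def in_prime_factors_iff prime_ge_1_nat)
      ultimately show "x = y" by simp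
    qed
    have "card ((\<lambda>p. p - 1) ` P) = r" unfolding r_def by (rule card_image[OF inj])
    moreover have "\<Sum>((\<lambda>p. p - 1) ` P) = (\<Sum>p\<in>P. p - 1)" by (subst sum.reindex[OF inj]) (simp add: comp_def)
    moreover have "(\<Sum>i<card ((\<lambda>p. p - 1) ` P). i) \<le> \<Sum>((\<lambda>p. p - 1) ` P)"
      by (rule sum_lessThan_card) (use finP in simp)
    ultimately show ?thesis by simp
  qed
  then have rr: "r * r \<le> 2 * k + r" using sumP gauss2[of r] by linarith
  have "n = (\<Prod>p\<in>prime_factors n. p ^ multiplicity p n)" by (rule prime_factorization_nat[OF n])
  also have "\<dots> \<le> (\<Prod>p\<in>prime_factors n. 2 * k)" by (rule prod_mono) (use ppow in auto)
  also have "\<dots> = (2 * k) ^ card (prime_factors n)" by simp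
  also have "\<dots> \<le> (2 * k) ^ (r + 1)"
  proof (rule power_increasing)
    have "prime_factors n \<subseteq> insert 2 P" unfolding P_def by auto
    then have "card (prime_factors n) \<le> card (insert 2 P)" by (rule card_mono[rotated]) (use finP in simp)
    also have "\<dots> \<le> r + 1" unfolding r_def using finP by (simp add: card_insert_if)
    finally show "card (prime_factors n) \<le> r + 1" .
    show "1 \<le> 2 * k" using k1 by simp
  qed
  finally show ?thesis using rr by blast
qed

lemma ln_lower: "0 < x \<Longrightarrow> 1 - 1 / x \<le> ln (x::real)"
proof -
  assume x: "0 < x"
  have "ln (inverse x) \<le> inverse x - 1" by (rule ln_le_minus_one) (use x in simp)
  then show ?thesis by (simp add: ln_inverse divide_inverse)
qed

lemma lnln_bound:
  assumes k: "k \<ge> (2::nat)"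
  shows "ln (ln (real k + 2)) \<ge> 1 / 5"
proof -
  have l3: "1 \<le> ln (3::real)" using exp_le by (subst ln_ge_iff) auto
  have l43: "1 / 4 \<le> ln (4 / 3 :: real)" using ln_lower[of "4/3"] by simp
  have "ln (4::real) = ln 3 + ln (4 / 3)" by (simp add: ln_div)
  then have l4: "5 / 4 \<le> ln (4::real)" using l3 l43 by simp
  have "ln 4 \<le> ln (real k + 2)" using k by simp
  then have a: "5 / 4 \<le> ln (real k + 2)" using l4 by linarith
  have "ln (5 / 4) \<le> ln (ln (real k + 2))" by (rule ln_mono[OF a]) simp
  moreover have "1 / 5 \<le> ln (5 / 4 :: real)" using ln_lower[of "5/4"] by simp
  ultimately show ?thesis by linarith
qed

lemma final_bound:
  fixes k r n :: nat
  assumes k2: "k \<ge> 2" and rr: "r * r \<le> 2 * k + r" and nb: "n \<le> (2 * k) ^ (r + 1)"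
  shows "real n \<le> exp (30 * sqrt (real k * ln (ln (real k + 2))) * ln (real k))"
proof (cases "n = 0")
  case True then show ?thesis by simp
next
  case False
  have kpos: "real k \<ge> 2" using k2 by simp
  have sk: "sqrt (real k) \<ge> 1" using kpos by simp
  have rb: "real r \<le> 1 + sqrt (2 * real k)"
  proof (cases "r \<le> 1")
    case True then show ?thesis by (simp add: add_increasing2)
  next
    case False
    have "real r * real r \<le> 2 * real k + real r" using rr by (metis of_nat_add of_nat_le_iff of_nat_mult of_nat_numeral)
    then have "(real r - 1) ^ 2 \<le> 2 * real k" using False by (simp add: power2_eq_square algebra_simps)
    then have "real r - 1 \<le> sqrt (2 * real k)" by (rule real_le_rsqrt)
    then show ?thesis by simp
  qed
  have s2k: "sqrt (2 * real k) \<le> 2 * sqrt (real k)"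
  proof -
    have "sqrt (2 * real k) \<le> sqrt (4 * real k)" using kpos by simp
    also have "sqrt (4 * real k) = 2 * sqrt (real k)" by (simp add: real_sqrt_mult)
    finally show ?thesis .
  qed
  have r1: "real r + 1 \<le> 4 * sqrt (real k)" using rb s2k sk by linarith
  have l2k: "ln (2 * real k) \<le> 2 * ln (real k)"
  proof -
    have "2 * real k \<le> real k ^ 2" using kpos by (simp add: power2_eq_square)
    then have "ln (2 * real k) \<le> ln (real k ^ 2)" using kpos by simp
    then show ?thesis using kpos by (simp add: ln_realpow)
  qed
  have l2k0: "ln (2 * real k) \<ge> 0" using kpos by simp
  have lk0: "ln (real k) \<ge> 0" using kpos by simp
  have "real n \<le> real ((2 * k) ^ (r + 1))" using nb by (simp only: of_nat_le_iff)
  then have "ln (real n) \<le> ln (real ((2 * k) ^ (r + 1)))" using False by (intro ln_mono) auto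
  also have "\<dots> = ln ((2 * real k) ^ (r + 1))" by simp
  also have "\<dots> = real (r + 1) * ln (2 * real k)" by (rule ln_realpow)
  also have "\<dots> = (real r + 1) * ln (2 * real k)" by simp
  also have "\<dots> \<le> (4 * sqrt (real k)) * ln (2 * real k)" by (rule mult_right_mono[OF r1 l2k0])
  also have "\<dots> \<le> (4 * sqrt (real k)) * (2 * ln (real k))" by (rule mult_left_mono[OF l2k]) simp
  also have "\<dots> = 10 * sqrt (real k) * ln (real k) - 2 * sqrt (real k) * ln (real k)" by simp
  also have "\<dots> \<le> 10 * sqrt (real k) * ln (real k)" using sk lk0 by simp
  also have "\<dots> \<le> 30 * sqrt (real k * ln (ln (real k + 2))) * ln (real k)"
  proof -
    have ll: "ln (ln (real k + 2)) \<ge> 1 / 5" by (rule lnln_bound[OF k2])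
    have "real k / 5 \<le> real k * ln (ln (real k + 2))" using ll kpos
      by (metis divide_inverse inverse_eq_divide mult_left_mono of_nat_0_le_iff mult.commute mult_1)
    then have "sqrt (real k / 5) \<le> sqrt (real k * ln (ln (real k + 2)))" by simp
    moreover have "sqrt (real k) \<le> 3 * sqrt (real k / 5)"
    proof -
      have "sqrt (real k) \<le> sqrt (9 * (real k / 5))" using kpos by simp
      also have "\<dots> = sqrt 9 * sqrt (real k / 5)" by (rule real_sqrt_mult)
      also have "sqrt (9::real) = 3" using real_sqrt_abs[of 3] by simp
      finally show ?thesis .
    qed
    ultimately have "sqrt (real k) \<le> 3 * sqrt (real k * ln (ln (real k + 2)))" by linarith
    then have "10 * sqrt (real k) \<le> 30 * sqrt (real k * ln (ln (real k + 2)))" by linarith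
    then show ?thesis by (rule mult_right_mono[OF _ lk0])
  qed
  finally have "ln (real n) \<le> 30 * sqrt (real k * ln (ln (real k + 2))) * ln (real k)" .
  then have "exp (ln (real n)) \<le> exp (30 * sqrt (real k * ln (ln (real k + 2))) * ln (real k))" by simp
  then show ?thesis using False by simp
qed

theorem theorem2:
  shows "\<exists>c::real. c > 0 \<and>
    (\<forall>k::nat. k \<ge> 2 \<longrightarrow>
      (\<forall>(n::nat) (S::nat set). n \<ge> 1 \<and> circulant_set n S \<and> card S = k \<and>
          connected_circulant n S \<and> integral_circulant n S \<longrightarrow>
          real n \<le> exp (c * sqrt (real k * ln (ln (real k + 2))) * ln (real k))))"
proof (rule exI[of _ 30], intro conjI allI impI)
  show "(0::real) < 30" by simp
  fix k n :: nat and S :: "nat set"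
  assume k2: "k \<ge> 2"
  assume H: "n \<ge> 1 \<and> circulant_set n S \<and> card S = k \<and> connected_circulant n S \<and> integral_circulant n S"
  have n: "n > 0" using H by simp
  have S1: "S \<subseteq> {1..<n}" using H by (simp add: circulant_set_def)
  then have S: "S \<subseteq> {..<n}" by auto
  have k: "card S = k" using H by simp
  have ints: "\<And>j. lam n S j \<in> \<int>"
    using H lam_eigen[OF n S] unfolding integral_circulant_def by blast
  have clos: "\<And>s t. s \<in> S \<Longrightarrow> t < n \<Longrightarrow> gcd t n = gcd s n \<Longrightarrow> t \<in> S"
  proof -
    fix s t assume s: "s \<in> S" and t: "t < n" and g: "gcd t n = gcd s n"
    have "s > 0" using s S1 by auto
    then show "t \<in> S" by (rule class_closed[OF n S ints s _ t g])
  qed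
  have conn: "\<And>p. prime p \<Longrightarrow> p dvd n \<Longrightarrow> \<exists>s\<in>S. \<not> p dvd s"
    using conn_prime[OF n] H by blast
  have k1: "k \<ge> 1" using k2 by simp
  have ex: "\<exists>r. r * r \<le> 2 * k + r \<and> n \<le> (2 * k) ^ (r + 1)"
  proof (rule comb_bound[OF n S1 k k1])
    fix s t assume "s \<in> S" "t < n" "gcd t n = gcd s n" then show "t \<in> S" by (rule clos)
  next
    fix p assume "prime p" "p dvd n" then show "\<exists>s\<in>S. \<not> p dvd s" by (rule conn)
  qed
  then obtain r where r: "r * r \<le> 2 * k + r" "n \<le> (2 * k) ^ (r + 1)" by blast
  show "real n \<le> exp (30 * sqrt (real k * ln (ln (real k + 2))) * ln (real k))"
    by (rule final_bound[OF k2 r])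
qed

end
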